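(* Let $k>0$ and $g(u;a)=u(1-u)(u-a)$. Define $$a_*^-(k)=1-\frac{2}{\sqrt{4k+1}+1},\qquad a_1^-(k)=\max\Big\{1-\frac{2}{2\sqrt k+1},0\Big\},$$ and for $0\le a\le a_*^-(k)$, $$d^-_{\min}(a,k)=\frac{2a^2k-a+2k-2(a+1)\sqrt k\sqrt{ka^2-a(2k+1)+k}}{(4k+1)^2},$$ $$d^-_{\max}(a,k)=\begin{cases}\dfrac{(1-a)^2}{4}, & a\in[0,a_1^-(k)),\\[2mm] \dfrac{2a^2k-a+2k+2(a+1)\sqrt k\sqrt{ka^2-a(2k+1)+k}}{(4k+1)^2}, & a\in[a_1^-(k),a_*^-(k)].\end{cases}$$ Then: (i) $d^-_{\min},d^-_{\max}\in C([0,a_*^-(k)]\times(0,\infty);\mathbb R)$ and $0\le d^-_{\min}(a,k)\le d^-_{\max}(a,k)\le d^-(a)$ for all $a\in[0,a_*^-(k)]$, where $d^-(a)=\max_{y\in(a,1)}g(y;a)/y$; (ii) $d^-_{\max}(a_*^-(k),k)=d^-_{\min}(a_*^-(k),k)$; (iii) $$\mathcal D^-(k)=\{(a,d)\in\mathcal H:\ a<a_*^-(k),\ d^-_{\min}(a,k)<d<d^-_{\max}(a,k)\}.$$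
   Context: Let $\mathcal H=(0,1)\times(0,\infty)$. For $k>0$, $a\in(0,1)$, $A\in(0,1)$ let $$d^\diamond(A;a)=\inf\{d>0:\ d(k+1)(A-v)-g(A;a)\ge -g(v;a)\ \text{for all }v\in[0,A]\},$$ and $$\mathcal D^-(k)=\Big\{(a,d)\in\mathcal H:\ d^\diamond(A;a)<d<\frac{g(A;a)}{A}\ \text{for some }A\in(a,1)\Big\},$$ with $g$ the cubic above. *)

theory Defs
  imports "HOL-Analysis.Analysis"
begin

definition g :: "real \<Rightarrow> real \<Rightarrow> real" where
  "g u a = u * (1 - u) * (u - a)"

definition H :: "(real \<times> real) set" where
  "H = {0<..<1} \<times> {0<..}"

definition d_diamond :: "real \<Rightarrow> real \<Rightarrow> real \<Rightarrow> real" where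
  "d_diamond k A a = Inf {d. d > 0 \<and>
      (\<forall>v\<in>{0..A}. d * (k + 1) * (A - v) - g A a \<ge> - g v a)}"

definition D_minus :: "real \<Rightarrow> (real \<times> real) set" where
  "D_minus k = {(a, d). (a, d) \<in> H \<and>
      (\<exists>A\<in>{a<..<1}. d_diamond k A a < d \<and> d < g A a / A)}"

definition d_minus :: "real \<Rightarrow> real" where
  "d_minus a = Sup ((\<lambda>y. g y a / y) ` {a<..<1})"

definition a_star_minus :: "real \<Rightarrow> real" where
  "a_star_minus k = 1 - 2 / (sqrt (4 * k + 1) + 1)"

definition a1_minus :: "real \<Rightarrow> real" where
  "a1_minus k = max (1 - 2 / (2 * sqrt k + 1)) 0"

definition d_min :: "real \<Rightarrow> real \<Rightarrow> real" where
  "d_min a k = (2 * a^2 * k - a + 2 * k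
      - 2 * (a + 1) * sqrt k * sqrt (k * a^2 - a * (2 * k + 1) + k)) / (4 * k + 1)^2"

definition d_max :: "real \<Rightarrow> real \<Rightarrow> real" where
  "d_max a k = (if a < a1_minus k then (1 - a)^2 / 4
     else (2 * a^2 * k - a + 2 * k
      + 2 * (a + 1) * sqrt k * sqrt (k * a^2 - a * (2 * k + 1) + k)) / (4 * k + 1)^2)"

end

theory Submission
  imports Defs
begin

definition hh :: "real \<Rightarrow> real \<Rightarrow> real \<Rightarrow> real" where
  "hh a x y = -(x^2 + x * y + y^2) + (1+a) * (x+y) - a"
definition UU :: "real \<Rightarrow> real \<Rightarrow> real" where
  "UU a A = (1-A) * (A-a)"
definition qq :: "real \<Rightarrow> real \<Rightarrow> real" where
  "qq a A = ((1+a)-A) * ((1+a)+3 * A)/4 - a"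
definition DD :: "real \<Rightarrow> real \<Rightarrow> real" where
  "DD k a = k  *  a^2 - a  *  (2  *  k + 1) + k"
definition P4 :: "real \<Rightarrow> real \<Rightarrow> real \<Rightarrow> real" where
  "P4 k a A = (4 * k+1) * A^2 - 2 * (2 * k+1) * (1+a) * A + 4 * k * a + (1+a)^2"
definition Ap :: "real \<Rightarrow> real \<Rightarrow> real" where
  "Ap k a = ((2 * k+1) * (1+a) + 2 * sqrt k * sqrt (DD k a))/(4 * k+1)"
definition Am :: "real \<Rightarrow> real \<Rightarrow> real" where
  "Am k a = ((2 * k+1) * (1+a) - 2 * sqrt k * sqrt (DD k a))/(4 * k+1)"

lemma g_diff: "g A a - g v a = (A - v)  *  hh a A v"
  unfolding g_def hh_def by (simp add: field_simps power2_eq_square)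

lemma hh_le_qq: "hh a A v \<le> qq a A"
proof -
  have "qq a A - hh a A v = (v - (1+a-A)/2)^2"
    unfolding qq_def hh_def by (simp add: field_simps power2_eq_square)
  then show ?thesis by (metis diff_ge_0_iff_ge zero_le_power2)
qed

lemma hh_eq_qq: "hh a A ((1+a-A)/2) = qq a A"
  unfolding qq_def hh_def by (simp add: field_simps power2_eq_square)

lemma qq_UU: "qq a A - (k+1)  *  UU a A = P4 k a A / 4"
  unfolding qq_def UU_def P4_def by (simp add: field_simps power2_eq_square)

lemma UU_g: "A > 0 \<Longrightarrow> g A a / A = UU a A"
  unfolding g_def UU_def by (simp add: field_simps)

lemma UU_le_max: "UU a x \<le> (1-a)^2/4"
proof -
  have "(1-a)^2/4 - UU a x = (x - (1+a)/2)^2"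
    unfolding UU_def by (simp add: field_simps power2_eq_square)
  then show ?thesis by (metis diff_ge_0_iff_ge zero_le_power2)
qed

lemma UU_mono: "(1+a)/2 \<le> y \<Longrightarrow> y \<le> x \<Longrightarrow> UU a x \<le> UU a y"
proof -
  assume h: "(1+a)/2 \<le> y" "y \<le> x"
  have "UU a y - UU a x = (x - y)  *  (x + y - (1+a))"
    unfolding UU_def by (simp add: algebra_simps)
  moreover have "(x - y)  *  (x + y - (1+a)) \<ge> 0" using h by (intro mult_nonneg_nonneg) auto
  ultimately show ?thesis by linarith
qed

lemma UU_smono: "(1+a)/2 \<le> y \<Longrightarrow> y < x \<Longrightarrow> UU a x < UU a y"
proof -
  assume h: "(1+a)/2 \<le> y" "y < x"
  have "UU a y - UU a x = (x - y)  *  (x + y - (1+a))"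
    unfolding UU_def by (simp add: algebra_simps)
  moreover have "(x - y)  *  (x + y - (1+a)) > 0" using h by (intro mult_pos_pos) auto
  ultimately show ?thesis by linarith
qed

lemma qq_mono: "(1+a)/3 \<le> y \<Longrightarrow> y \<le> x \<Longrightarrow> qq a x \<le> qq a y"
proof -
  assume h: "(1+a)/3 \<le> y" "y \<le> x"
  have "qq a y - qq a x = (x - y)  *  (3 * (x + y) - 2 * (1+a))/4"
    unfolding qq_def by (simp add: field_simps)
  moreover have "(x - y)  *  (3 * (x + y) - 2 * (1+a)) \<ge> 0" using h by (intro mult_nonneg_nonneg) auto
  ultimately show ?thesis by linarith
qed

lemma P4_fact2: "(4 * k+1) * P4 k a A = ((4 * k+1) * A - (2 * k+1) * (1+a))^2 - 4 * k * DD k a"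
  unfolding P4_def DD_def by (simp add: field_simps power2_eq_square)

lemma P4_neg_D: "k > 0 \<Longrightarrow> P4 k a A < 0 \<Longrightarrow> DD k a > 0"
proof -
  assume k: "k > 0" and P: "P4 k a A < 0"
  have "(4 * k+1) * P4 k a A < 0" using k P by (simp add: mult_pos_neg)
  then have "4 * k * DD k a > 0" unfolding P4_fact2 by (smt (verit) zero_le_power2)
  then show ?thesis using k by (simp add: zero_less_mult_iff)
qed

locale kctx =
  fixes k a :: real
  assumes k: "k > 0" and D: "DD k a \<ge> 0" and a0: "a \<ge> 0"
begin

definition "tr = sqrt k  *  sqrt (DD k a)"

lemma tr_sq: "tr^2 = k  *  DD k a" and tr_nn: "tr \<ge> 0"
  using k D by (auto simp: tr_def power_mult_distrib)

lemma Ap_eq: "(4 * k+1)  *  Ap k a = (2 * k+1) * (1+a) + 2 * tr"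
  using k by (simp add: Ap_def tr_def field_simps)
lemma Am_eq: "(4 * k+1)  *  Am k a = (2 * k+1) * (1+a) - 2 * tr"
  using k by (simp add: Am_def tr_def field_simps)

lemma P4_fact: "(4 * k+1)  *  P4 k a A = ((4 * k+1) * A - (2 * k+1) * (1+a))^2 - 4 * tr^2"
  unfolding P4_def tr_sq DD_def by (simp add: field_simps power2_eq_square)

lemma P4_neg_iff: "P4 k a A < 0 \<longleftrightarrow> Am k a < A \<and> A < Ap k a"
proof -
  define X where "X = (4 * k+1) * A - (2 * k+1) * (1+a)"
  have k1: "4 * k + 1 > 0" using k by simp
  have "P4 k a A < 0 \<longleftrightarrow> (4 * k+1) * P4 k a A < 0" using k1 by (simp add: mult_less_0_iff)
  also have "\<dots> \<longleftrightarrow> X^2 < (2 * tr)^2" unfolding P4_fact X_def by (simp add: power_mult_distrib)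
  also have "\<dots> \<longleftrightarrow> \<bar>X\<bar> < 2 * tr" using abs_le_square_iff[of "2 * tr" X] tr_nn by (auto simp: not_le[symmetric])
  also have "\<dots> \<longleftrightarrow> (4 * k+1) * Am k a < (4 * k+1) * A \<and> (4 * k+1) * A < (4 * k+1) * Ap k a"
    unfolding Am_eq Ap_eq X_def by linarith
  also have "\<dots> \<longleftrightarrow> Am k a < A \<and> A < Ap k a" using k1 by simp
  finally show ?thesis .
qed

lemma P4_Ap: "P4 k a (Ap k a) = 0"
proof -
  have k1: "4 * k + 1 > 0" using k by simp
  have "(4 * k+1) * P4 k a (Ap k a) = 0" unfolding P4_fact
    using Ap_eq by (simp add: power_mult_distrib algebra_simps)
  then show ?thesis using k1 by simp
qed

lemma UU_Ap: "UU a (Ap k a) = d_min a k"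
proof -
  have k1: "4 * k + 1 > 0" using k by simp
  have "(4 * k+1)^2 * UU a (Ap k a) = ((4 * k+1) - (4 * k+1) * Ap k a) * ((4 * k+1) * Ap k a - (4 * k+1) * a)"
    unfolding UU_def by (simp add: algebra_simps power2_eq_square)
  also have "\<dots> = 2 * a^2 * k - a + 2 * k - 2 * (a + 1) * tr"
    unfolding Ap_eq using tr_sq unfolding DD_def by (simp add: algebra_simps power2_eq_square)
  finally show ?thesis unfolding d_min_def tr_def DD_def using k1 by (simp add: field_simps)
qed

lemma UU_Am: "UU a (Am k a) = (2 * a^2 * k - a + 2 * k
      + 2 * (a + 1) * sqrt k * sqrt (k * a^2 - a * (2 * k + 1) + k)) / (4 * k + 1)^2"
proof -
  have k1: "4 * k + 1 > 0" using k by simp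
  have "(4 * k+1)^2 * UU a (Am k a) = ((4 * k+1) - (4 * k+1) * Am k a) * ((4 * k+1) * Am k a - (4 * k+1) * a)"
    unfolding UU_def by (simp add: algebra_simps power2_eq_square)
  also have "\<dots> = 2 * a^2 * k - a + 2 * k + 2 * (a + 1) * tr"
    unfolding Am_eq using tr_sq unfolding DD_def by (simp add: algebra_simps power2_eq_square)
  finally show ?thesis unfolding tr_def DD_def using k1 by (simp add: field_simps)
qed

lemma Ap_ge: "(1+a)/2 \<le> Ap k a" and Am_le_Ap: "Am k a \<le> Ap k a"
proof -
  have k1: "4 * k + 1 > 0" using k by simp
  have "(4 * k+1) * ((1+a)/2) \<le> (4 * k+1) * Ap k a" unfolding Ap_eq using tr_nn k a0
    by (simp add: field_simps) 
  then show "(1+a)/2 \<le> Ap k a" using k1 by simp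
  have "(4 * k+1) * Am k a \<le> (4 * k+1) * Ap k a" unfolding Ap_eq Am_eq using tr_nn by simp
  then show "Am k a \<le> Ap k a" using k1 by simp
qed

end

lemma sq_le_abs: "0 \<le> (y::real) \<Longrightarrow> x^2 \<le> y^2 \<longleftrightarrow> \<bar>x\<bar> \<le> y"
  using abs_le_square_iff[of x y] by simp
lemma sq_le_nn: "0 \<le> (y::real) \<Longrightarrow> 0 \<le> x \<Longrightarrow> x^2 \<le> y^2 \<longleftrightarrow> x \<le> y"
  using sq_le_abs[of y x] by simp

context kctx
begin

lemma Am_half_iff: assumes a1: "a \<le> 1"
  shows "(1+a)/2 \<le> Am k a \<longleftrightarrow> 1 - 2 / (2 * sqrt k + 1) \<le> a"
proof -
  have k1: "4 * k + 1 > 0" using k by simp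
  define t where "t = sqrt k"
  have t0: "t \<ge> 0" and tt: "t^2 = k" using k by (auto simp: t_def)
  have "(1+a)/2 \<le> Am k a \<longleftrightarrow> (4 * k+1) * ((1+a)/2) \<le> (4 * k+1) * Am k a"
    by (rule mult_le_cancel_left_pos[OF k1, symmetric])
  also have "\<dots> \<longleftrightarrow> 4 * tr \<le> 1 + a"
  proof -
    have "(4 * k+1) * ((1+a)/2) = (2 * k + 1) * (1 + a) - 1 / 2 - a / 2" by (simp add: field_simps)
    then show ?thesis unfolding Am_eq by (rule_tac iffI) linarith+
  qed
  also have "\<dots> \<longleftrightarrow> (4 * tr)^2 \<le> (1+a)^2"
    by (rule sq_le_nn[symmetric]) (use tr_nn a0 in auto)
  also have "\<dots> \<longleftrightarrow> (4 * k + 1) * (4 * k * (1-a)^2) \<le> (4 * k + 1) * (1+a)^2"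
  proof -
    have "(4 * tr)^2 = 16 * (k * DD k a)" using tr_sq by (simp add: power_mult_distrib)
    moreover have "(4 * k + 1) * (4 * k * (1-a)^2) - (4 * k + 1) * (1+a)^2 = 16 * (k * DD k a) - (1+a)^2"
      unfolding DD_def by (simp add: algebra_simps power2_eq_square)
    ultimately show ?thesis by linarith
  qed
  also have "\<dots> \<longleftrightarrow> 4 * k * (1-a)^2 \<le> (1+a)^2"
    by (rule mult_le_cancel_left_pos[OF k1])
  also have "\<dots> \<longleftrightarrow> (2 * t * (1-a))^2 \<le> (1+a)^2" using tt by (simp add: power_mult_distrib)
  also have "\<dots> \<longleftrightarrow> 2 * t * (1-a) \<le> 1 + a"
    by (rule sq_le_nn) (use a1 a0 t0 in auto)
  also have "\<dots> \<longleftrightarrow> 2 * t - 1 \<le> a * (2 * t + 1)" by (simp add: algebra_simps)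
  also have "\<dots> \<longleftrightarrow> 1 - 2 / (2 * t + 1) \<le> a"
  proof -
    have p: "2 * t + 1 > 0" using t0 by simp
    have "1 - 2 / (2 * t + 1) = (2 * t - 1) / (2 * t + 1)" using p by (simp add: field_simps)
    then show ?thesis using p by (simp add: divide_le_eq)
  qed
  finally show ?thesis unfolding t_def .
qed

lemma Ap_le1: assumes a1: "a \<le> 1" shows "Ap k a \<le> 1"
proof -
  have k1: "4 * k + 1 > 0" using k by simp
  have Dk: "k * (1-a)^2 \<ge> a" using D unfolding DD_def by (simp add: algebra_simps power2_eq_square)
  have "(1-a)^2 \<le> (1-a)" using a0 a1 by (simp add: power2_eq_square mult_left_le)
  then have "k * (1-a)^2 \<le> k * (1-a)" using k by (simp add: mult_left_mono)
  then have R: "2 * k * (1-a) - a \<ge> 0" using Dk a0 by linarith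
  have e: "(2 * k * (1-a) - a)^2 - (2 * tr)^2 = 4 * k * a^2 + a^2"
    using tr_sq unfolding DD_def by (simp add: power_mult_distrib algebra_simps power2_eq_square)
  have "4 * k * a^2 + a^2 \<ge> 0" using k by simp
  then have "(2 * tr)^2 \<le> (2 * k * (1-a) - a)^2" using e by linarith
  then have "2 * tr \<le> 2 * k * (1-a) - a" using sq_le_nn[of "2 * k * (1-a) - a" "2 * tr"] R tr_nn by simp
  then have "(4 * k+1) * Ap k a \<le> (4 * k+1) * 1" unfolding Ap_eq by (simp add: algebra_simps)
  then show ?thesis using k1 by simp
qed

lemma Ap_ge_1ma: "1 - a \<le> Ap k a"
proof -
  have k1: "4 * k + 1 > 0" using k by simp
  have "tr \<ge> k * (1 - 3 * a) - a"
  proof (cases "k * (1 - 3 * a) - a \<le> 0")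
    case True then show ?thesis using tr_nn by linarith
  next
    case False
    then have h: "k * (1 - 3 * a) > a" by simp
    have ka: "k * a \<ge> 0" using a0 k by simp
    have e1: "4 * k * (1 - 2 * a) - 3 * a = 4 * (k * (1 - 3 * a)) + 4 * (k * a) - 3 * a"
      by (simp add: algebra_simps)
    have p1: "4 * k * (1 - 2 * a) - 3 * a > 0" unfolding e1 using h ka a0 by linarith
    have e2: "4 * k^2 * (1 - 2 * a) + k * (1 - 6 * a) - a = k * (4 * k * (1 - 2 * a) - 3 * a) + (k * (1 - 3 * a) - a)"
      by (simp add: algebra_simps power2_eq_square)
    have "k * (4 * k * (1 - 2 * a) - 3 * a) \<ge> 0" using p1 k by simp
    then have "4 * k^2 * (1 - 2 * a) + k * (1 - 6 * a) - a \<ge> 0" unfolding e2 using h by linarith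
    then have p2: "a * (4 * k^2 * (1 - 2 * a) + k * (1 - 6 * a) - a) \<ge> 0"
      using a0 by simp
    have e3: "tr^2 - (k * (1 - 3 * a) - a)^2 = a * (4 * k^2 * (1 - 2 * a) + k * (1 - 6 * a) - a)"
      unfolding tr_sq DD_def by (simp add: algebra_simps power2_eq_square)
    have "(k * (1 - 3 * a) - a)^2 \<le> tr^2" using e3 p2 by linarith
    then show ?thesis using sq_le_nn[of tr "k * (1 - 3 * a) - a"] tr_nn False by simp
  qed
  then have "(4 * k+1) * (1 - a) \<le> (4 * k+1) * Ap k a" unfolding Ap_eq by (simp add: algebra_simps)
  then show ?thesis using k1 by simp
qed

end

lemma DD_factor: assumes k: "k > 0"
  shows "4 * DD k a = ((sqrt (4 * k + 1) + 1) * a - (sqrt (4 * k + 1) - 1)) * ((sqrt (4 * k + 1) - 1) * a - (sqrt (4 * k + 1) + 1))"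
proof -
  have "(sqrt (4 * k + 1))^2 = 4 * k + 1" using k by simp
  then show ?thesis unfolding DD_def by (simp add: algebra_simps power2_eq_square)
qed

lemma s_gt1: "k > 0 \<Longrightarrow> sqrt (4 * k + 1) > 1"
  by simp

lemma astar_eq: "k > 0 \<Longrightarrow> a_star_minus k = (sqrt (4 * k + 1) - 1) / (sqrt (4 * k + 1) + 1)"
proof -
  assume k: "k > 0"
  define s where "s = sqrt (4 * k + 1)"
  have "s > 1" using s_gt1[OF k] by (simp add: s_def)
  then have ne: "s + 1 \<noteq> 0" by simp
  have "1 - 2 / (s + 1) = (s - 1) / (s + 1)" using ne by (simp add: field_simps)
  then show ?thesis unfolding a_star_minus_def s_def .
qed

lemma astar_bounds: "k > 0 \<Longrightarrow> 0 < a_star_minus k \<and> a_star_minus k < 1"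
proof -
  assume k: "k > 0"
  define s where "s = sqrt (4 * k + 1)"
  have s1: "s > 1" using s_gt1[OF k] by (simp add: s_def)
  have "0 < (s - 1) / (s + 1)" using s1 by simp
  moreover have "(s - 1) / (s + 1) < 1" using s1 by simp
  ultimately show ?thesis unfolding astar_eq[OF k] s_def by simp
qed

lemma neg_fac: "s > 1 \<Longrightarrow> a < 1 \<Longrightarrow> (s - 1) * a - (s + 1) < (0::real)"
proof -
  assume s1: "s > 1" and a1: "a < 1"
  have "(s-1)*a < (s-1)*1" using s1 a1 by (intro mult_strict_left_mono) auto
  then show ?thesis by simp
qed

lemma DD_pos_iff: assumes k: "k > 0" and a1: "a < 1"
  shows "DD k a > 0 \<longleftrightarrow> a < a_star_minus k"
proof -
  define s where "s = sqrt (4 * k + 1)"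
  have s1: "s > 1" using s_gt1[OF k] by (simp add: s_def)
  have neg: "(s - 1) * a - (s + 1) < 0" using neg_fac[OF s1 a1] .
  have e: "4 * DD k a = ((s + 1) * a - (s - 1)) * ((s - 1) * a - (s + 1))"
    using DD_factor[OF k] by (simp add: s_def)
  have "DD k a > 0 \<longleftrightarrow> ((s + 1) * a - (s - 1)) * ((s - 1) * a - (s + 1)) > 0"
    using e by linarith
  also have "\<dots> \<longleftrightarrow> (s + 1) * a - (s - 1) < 0"
    using neg by (simp add: zero_less_mult_iff)
  also have "\<dots> \<longleftrightarrow> a * (s + 1) < s - 1" by (simp add: algebra_simps)
  also have "\<dots> \<longleftrightarrow> a < (s - 1) / (s + 1)" using s1 by (simp add: pos_less_divide_eq)
  also have "\<dots> \<longleftrightarrow> a < a_star_minus k" using astar_eq[OF k] by (simp add: s_def)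
  finally show ?thesis .
qed

lemma DD_nonneg: assumes k: "k > 0" and a1: "a \<le> a_star_minus k"
  shows "DD k a \<ge> 0"
proof -
  define s where "s = sqrt (4 * k + 1)"
  have s1: "s > 1" using s_gt1[OF k] by (simp add: s_def)
  have "a < 1" using astar_bounds[OF k] a1 by linarith
  then have neg: "(s - 1) * a - (s + 1) < 0" using neg_fac[OF s1] by simp
  have "a \<le> (s - 1) / (s + 1)" using a1 astar_eq[OF k] by (simp add: s_def)
  then have "a * (s + 1) \<le> s - 1" using s1 by (simp add: pos_le_divide_eq)
  then have "(s + 1) * a - (s - 1) \<le> 0" by (simp add: algebra_simps)
  then have "((s + 1) * a - (s - 1)) * ((s - 1) * a - (s + 1)) \<ge> 0"
    using neg by (simp add: mult_nonpos_nonpos)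
  moreover have e: "4 * DD k a = ((s + 1) * a - (s - 1)) * ((s - 1) * a - (s + 1))"
    using DD_factor[OF k] by (simp add: s_def)
  ultimately show ?thesis by linarith
qed

lemma DD_astar: assumes k: "k > 0" shows "DD k (a_star_minus k) = 0"
proof -
  define s where "s = sqrt (4 * k + 1)"
  have s1: "s > 1" using s_gt1[OF k] by (simp add: s_def)
  have "a_star_minus k = (s - 1) / (s + 1)" using astar_eq[OF k] by (simp add: s_def)
  then have "a_star_minus k * (s + 1) = s - 1" using s1 by simp
  then have "(s + 1) * a_star_minus k - (s - 1) = 0" by (simp add: algebra_simps)
  moreover have e: "4 * DD k (a_star_minus k) = ((s + 1) * a_star_minus k - (s - 1)) * ((s - 1) * a_star_minus k - (s + 1))"
    using DD_factor[OF k] by (simp add: s_def)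
  ultimately show ?thesis by simp
qed

lemma astar_ge_b: assumes k: "k > 0" shows "1 - 2 / (2 * sqrt k + 1) \<le> a_star_minus k"
proof -
  have "2 * sqrt k \<le> sqrt (4 * k + 1)"
  proof -
    have "sqrt (4 * k) = 2 * sqrt k" by (simp add: real_sqrt_mult)
    moreover have "sqrt (4 * k) \<le> sqrt (4 * k + 1)" by simp
    ultimately show ?thesis by simp
  qed
  moreover have "0 < (sqrt (4 * k + 1) + 1) * (2 * sqrt k + 1)" using k
    by (intro mult_pos_pos add_nonneg_pos) auto
  ultimately have "2 / (sqrt (4 * k + 1) + 1) \<le> 2 / (2 * sqrt k + 1)"
    using k by (intro divide_left_mono) auto
  then show ?thesis unfolding a_star_minus_def by linarith
qed

lemma hh_A0: "hh a A 0 = UU a A"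
  unfolding hh_def UU_def by (simp add: algebra_simps power2_eq_square)

lemma hh_near: "hh a A v = hh a A A - (A - v) * (1 + a - 2 * A - v)"
  unfolding hh_def by (simp add: algebra_simps power2_eq_square)

lemma dd_char:
  assumes k: "k > 0" and a: "0 < a" and aA: "a < A" and A1: "A < 1"
  shows "d_diamond k A a < d \<longleftrightarrow> (\<forall>v\<in>{0..A}. hh a A v < (k+1) * d)"
proof -
  have A0: "A > 0" using a aA by linarith
  have cont: "continuous_on {0..A} (hh a A)" unfolding hh_def by (intro continuous_intros)
  obtain v0 where v0: "v0 \<in> {0..A}" and v0max: "\<forall>v\<in>{0..A}. hh a A v \<le> hh a A v0"
    using continuous_attains_sup[OF compact_Icc _ cont] A0 by auto
  define M where "M = hh a A v0"
  have "UU a A > 0" unfolding UU_def using aA A1 by simp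
  then have M0: "M > 0" using v0max A0 hh_A0[of a A] unfolding M_def by force
  have k1: "k + 1 > 0" using k by simp
  let ?S = "{d. d > 0 \<and> (\<forall>v\<in>{0..A}. d * (k + 1) * (A - v) - g A a \<ge> - g v a)}"
  have S: "?S = {M / (k+1)..}"
  proof (intro set_eqI iffI)
    fix d assume dS: "d \<in> ?S"
    then have d0: "d > 0" by simp
    have cond: "(A - v) * hh a A v \<le> (A - v) * (d * (k+1))" if v: "v \<in> {0..A}" for v
    proof -
      have "- g v a \<le> d * (k + 1) * (A - v) - g A a" using dS v by blast
      moreover have "d * (k + 1) * (A - v) = (A - v) * (d * (k+1))" by simp
      ultimately show ?thesis using g_diff[of A a v] by linarith
    qed
    have "M \<le> d * (k+1)"
    proof (rule ccontr)
      assume "\<not> M \<le> d * (k+1)"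
      then have lt: "d * (k+1) < M" by simp
      show False
      proof (cases "v0 < A")
        case True
        have "(A - v0) * M \<le> (A - v0) * (d * (k+1))" using cond[OF v0] unfolding M_def .
        then have "M \<le> d * (k+1)" using True by simp
        then show False using lt by simp
      next
        case False
        then have vA: "v0 = A" using v0 by simp
        define e where "e = M - d * (k+1)"
        have e0: "e > 0" using lt unfolding e_def by simp
        define dl where "dl = min A (e / 10)"
        have dl0: "dl > 0" using A0 e0 unfolding dl_def by simp
        define v where "v = A - dl"
        have vin: "v \<in> {0..A}" using dl0 unfolding v_def dl_def by auto
        have vlt: "v < A" using dl0 unfolding v_def by simp
        have b1: "1 + a - 2 * A - v \<le> 2" using vin a aA A1 by auto
        have "(A - v) * (1 + a - 2 * A - v) \<le> dl * 2"
          using mult_left_mono[OF b1, of dl] dl0 unfolding v_def by simp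
        also have "\<dots> \<le> e / 5" unfolding dl_def by simp
        finally have "(A - v) * (1 + a - 2 * A - v) \<le> e / 5" .
        then have hv: "hh a A v > d * (k+1)"
          using hh_near[of a A v] vA e0 unfolding M_def e_def by simp
        have "(A - v) * hh a A v \<le> (A - v) * (d * (k+1))" using cond[OF vin] .
        then have "hh a A v \<le> d * (k+1)" using vlt by simp
        then show False using hv by simp
      qed
    qed
    then show "d \<in> {M / (k+1)..}" using k1 by (simp add: divide_le_eq)
  next
    fix d assume "d \<in> {M / (k+1)..}"
    then have dM: "M \<le> d * (k+1)" using k1 by (simp add: divide_le_eq)
    then have d0: "d > 0" using M0 k1 by (smt (verit) zero_less_mult_iff)
    have "- g v a \<le> d * (k + 1) * (A - v) - g A a" if v: "v \<in> {0..A}" for v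
    proof -
      have "hh a A v \<le> d * (k+1)" using v0max v dM unfolding M_def by force
      then have "(A - v) * hh a A v \<le> (A - v) * (d * (k+1))" using v by (intro mult_left_mono) auto
      then show ?thesis using g_diff[of A a v] by (simp add: algebra_simps)
    qed
    then show "d \<in> ?S" using d0 by auto
  qed
  have dd: "d_diamond k A a = M / (k+1)" unfolding d_diamond_def S by simp
  show ?thesis
  proof
    assume "d_diamond k A a < d"
    then have "M < (k+1) * d" unfolding dd using k1 by (simp add: divide_less_eq algebra_simps)
    then show "\<forall>v\<in>{0..A}. hh a A v < (k+1) * d" using v0max unfolding M_def by force
  next
    assume "\<forall>v\<in>{0..A}. hh a A v < (k+1) * d"
    then have "M < (k+1) * d" using v0 unfolding M_def by blast
    then show "d_diamond k A a < d" unfolding dd using k1 by (simp add: divide_less_eq algebra_simps)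
  qed
qed

lemma UU_half: "UU a ((1+a)/2) = (1-a)^2/4"
  unfolding UU_def by (simp add: field_simps power2_eq_square)

lemma hh_diag_a: "hh a a a = a * (1 - a)"
  unfolding hh_def by (simp add: algebra_simps power2_eq_square)

lemma qq_1ma: "qq a (1 - a) = a * (1 - a)"
  unfolding qq_def by (simp add: field_simps power2_eq_square)

lemma hh_diag_mono: assumes "a \<le> A" "3 * (A + a) \<le> 2 * (1 + a)" shows "hh a a a \<le> hh a A A"
proof -
  have "hh a A A - hh a a a = (A - a) * (2 * (1 + a) - 3 * (A + a))"
    unfolding hh_def by (simp add: algebra_simps power2_eq_square)
  moreover have "(A - a) * (2 * (1 + a) - 3 * (A + a)) \<ge> 0" using assms by simp
  ultimately show ?thesis by linarith
qed

lemma q2_eq: "(k+1) * UU a x - hh a x x = -(k-2) * x^2 + (k-1) * (1+a) * x - k * a"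
  unfolding hh_def UU_def by (simp add: algebra_simps power2_eq_square)

lemma hh_third: "hh a ((1+a)/3) ((1+a)/3) = qq a ((1+a)/3)"
proof -
  have e: "(1 + a - (1+a)/3)/2 = (1+a)/3" by (simp add: field_simps)
  have "hh a ((1+a)/3) ((1 + a - (1+a)/3)/2) = qq a ((1+a)/3)" by (rule hh_eq_qq)
  then show ?thesis unfolding e .
qed

lemma a1_iff: "0 \<le> a \<Longrightarrow> a < a1_minus k \<longleftrightarrow> a < 1 - 2 / (2 * sqrt k + 1)"
  unfolding a1_minus_def by auto

lemma dmax_lt: "a < a1_minus k \<Longrightarrow> d_max a k = (1-a)^2/4"
  unfolding d_max_def by simp

lemma (in kctx) dmax_ge: "\<not> a < a1_minus k \<Longrightarrow> d_max a k = UU a (Am k a)"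
  unfolding d_max_def using UU_Am by simp

lemma q2_third:
  assumes k: "k > 0" and a: "0 < a" and aA: "a < A" and AB: "A < (1+a)/3"
    and qA: "(k+1) * UU a A - hh a A A > 0"
  shows "(k+1) * UU a ((1+a)/3) - hh a ((1+a)/3) ((1+a)/3) > 0"
proof -
  define B where "B = (1+a)/3"
  define q where "q = (\<lambda>x. -(k-2) * x^2 + (k-1) * (1+a) * x - k * a)"
  have qe: "\<And>x. (k+1) * UU a x - hh a x x = q x" unfolding q_def by (rule q2_eq)
  have qa: "q a < 0"
  proof -
    have "q a = (k+1) * UU a a - hh a a a" by (simp add: qe)
    also have "\<dots> = - (a * (1 - a))" unfolding hh_diag_a by (simp add: UU_def)
    finally show ?thesis using a aA AB by simp
  qed
  have qA': "q A > 0" using qA qe by simp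
  have "q B > 0"
  proof (cases "k \<ge> 2")
    case True
    have e: "q B - q A = (B - A) * ((k-1) * (1+a) - (k-2) * (B + A))"
      unfolding q_def by (simp add: algebra_simps power2_eq_square)
    have "A < B" using AB unfolding B_def .
    then have "B + A \<le> 2 * B" by linarith
    then have "(k-2) * (B + A) \<le> (k-2) * (2 * B)" using True
      by (intro mult_left_mono) auto
    moreover have "(k-1) * (1+a) - (k-2) * (2 * B) = (k + 1) * (1 + a) / 3"
      unfolding B_def by (simp add: field_simps)
    moreover have "(k + 1) * (1 + a) / 3 > 0" using k a by simp
    ultimately have "(k-1) * (1+a) - (k-2) * (B + A) > 0" by linarith
    then have "(B - A) * ((k-1) * (1+a) - (k-2) * (B + A)) > 0" using AB unfolding B_def by simp
    then show ?thesis using e qA' by linarith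
  next
    case False
    have e: "(A - a) * q B + (B - A) * q a - (B - a) * q A = (2 - k) * (A - a) * (B - A) * (B - a)"
      unfolding q_def by (simp add: algebra_simps power2_eq_square)
    have "(2 - k) * (A - a) * (B - A) * (B - a) \<ge> 0" using False aA AB unfolding B_def by simp
    moreover have "(B - A) * q a < 0" using qa AB unfolding B_def by (simp add: mult_pos_neg)
    moreover have "(B - a) * q A > 0" using qA' aA AB unfolding B_def by simp
    ultimately have "(A - a) * q B > 0" using e by linarith
    then show ?thesis using aA by (simp add: zero_less_mult_iff)
  qed
  then show ?thesis using qe unfolding B_def by simp
qed

lemma incl1:
  assumes k: "k > 0" and a: "0 < a" "a < 1" and d: "d > 0" and aA: "a < A" and A1: "A < 1"
    and H1: "\<forall>v\<in>{0..A}. hh a A v < (k+1) * d" and H2: "d < UU a A"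
  shows "DD k a > 0 \<and> d_min a k < d \<and> d < d_max a k"
proof -
  have k1: "k + 1 > 0" using k by simp
  have dU: "(k+1) * d < (k+1) * UU a A" using H2 k1 by simp
  show ?thesis
  proof (cases "(1+a)/3 \<le> A")
    case True
    have "(1+a-A)/2 \<in> {0..A}" using True A1 a by auto
    then have "hh a A ((1+a-A)/2) < (k+1) * d" using H1 by blast
    then have "qq a A < (k+1) * d" using hh_eq_qq[of a A] by linarith
    then have P: "P4 k a A < 0" using dU qq_UU[of a A k] by linarith
    have Dp: "DD k a > 0" using P4_neg_D[OF k P] .
    interpret kctx k a using k Dp a by unfold_locales auto
    have in1: "Am k a < A" "A < Ap k a" using P P4_neg_iff by auto
    have "qq a (Ap k a) \<le> qq a A" using qq_mono[OF True] in1 by simp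
    moreover have "qq a (Ap k a) = (k+1) * d_min a k"
      using qq_UU[of a "Ap k a" k] P4_Ap UU_Ap by simp
    ultimately have "(k+1) * d_min a k < (k+1) * d" using \<open>qq a A < (k+1) * d\<close> by linarith
    then have dmin: "d_min a k < d" using k1 by simp
    have dmax: "d < d_max a k"
    proof (cases "a < a1_minus k")
      case True
      then show ?thesis using dmax_lt[OF True] UU_le_max[of a A] H2 by linarith
    next
      case False
      then have "1 - 2 / (2 * sqrt k + 1) \<le> a" using a1_iff[of a k] a by simp
      then have "(1+a)/2 \<le> Am k a" using Am_half_iff a by simp
      then have "UU a A < UU a (Am k a)" using UU_smono in1 by simp
      then show ?thesis using dmax_ge[OF False] H2 by simp
    qed
    show ?thesis using Dp dmin dmax by simp
  next
    case False
    then have AB: "A < (1+a)/3" by simp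
    have "A \<in> {0..A}" using a aA by simp
    then have hA: "hh a A A < (k+1) * d" using H1 by blast
    have "(k+1) * UU a A - hh a A A > 0" using hA dU by linarith
    then have "(k+1) * UU a ((1+a)/3) - hh a ((1+a)/3) ((1+a)/3) > 0"
      using q2_third[OF k a(1) aA AB] by simp
    then have P: "P4 k a ((1+a)/3) < 0" using qq_UU[of a "(1+a)/3" k] hh_third[of a] by linarith
    have Dp: "DD k a > 0" using P4_neg_D[OF k P] .
    interpret kctx k a using k Dp a by unfold_locales auto
    have in1: "Am k a < (1+a)/3" "(1+a)/3 < Ap k a" using P P4_neg_iff by auto
    have a2: "a < 1/2" using aA AB by simp
    have "hh a a a \<le> hh a A A" using aA AB by (intro hh_diag_mono) auto
    then have "a * (1 - a) < (k+1) * d" using hA hh_diag_a[of a] by simp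
    moreover have "qq a (Ap k a) \<le> qq a (1 - a)"
      using a2 Ap_ge_1ma by (intro qq_mono) auto
    moreover have "qq a (Ap k a) = (k+1) * d_min a k"
      using qq_UU[of a "Ap k a" k] P4_Ap UU_Ap by simp
    ultimately have "(k+1) * d_min a k < (k+1) * d" using qq_1ma[of a] by linarith
    then have dmin: "d_min a k < d" using k1 by simp
    have dmax: "d < d_max a k"
    proof (cases "a < a1_minus k")
      case True
      then show ?thesis using dmax_lt[OF True] UU_le_max[of a A] H2 by linarith
    next
      case False
      then have "1 - 2 / (2 * sqrt k + 1) \<le> a" using a1_iff[of a k] a by simp
      then have "(1+a)/2 \<le> Am k a" using Am_half_iff a by simp
      then show ?thesis using in1 a by simp
    qed
    show ?thesis using Dp dmin dmax by simp
  qed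
qed

lemma incl2:
  assumes k: "k > 0" and a: "0 < a" "a < 1" and d: "d > 0" and Dp: "DD k a > 0"
    and d1: "d_min a k < d" and d2: "d < d_max a k"
  shows "\<exists>A\<in>{a<..<1}. (\<forall>v\<in>{0..A}. hh a A v < (k+1) * d) \<and> d < UU a A"
proof -
  interpret kctx k a using k Dp a by unfold_locales auto
  have k1: "k + 1 > 0" using k by simp
  define c where "c = 1 + a"
  obtain A0 where A0: "UU a A0 = d_max a k" "c/2 \<le> A0" "Am k a \<le> A0"
  proof (cases "a < a1_minus k")
    case True
    then have "a < 1 - 2 / (2 * sqrt k + 1)" using a1_iff[of a k] a by simp
    then have "\<not> c/2 \<le> Am k a" using Am_half_iff a unfolding c_def by simp
    then show ?thesis using that[of "c/2"] dmax_lt[OF True] UU_half[of a] unfolding c_def by simp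
  next
    case False
    then have "1 - 2 / (2 * sqrt k + 1) \<le> a" using a1_iff[of a k] a by simp
    then have "c/2 \<le> Am k a" using Am_half_iff a unfolding c_def by simp
    then show ?thesis using that[of "Am k a"] dmax_ge[OF False] by simp
  qed
  have dlt: "d < (1-a)^2/4" using d2 A0(1) UU_le_max[of a A0] by linarith
  define w where "w = sqrt ((1-a)^2 - 4 * d)"
  have w0: "w > 0" using dlt unfolding w_def by simp
  have ww: "w^2 = (1-a)^2 - 4 * d" using dlt unfolding w_def by simp
  define Ad where "Ad = (c + w) / 2"
  have UAd: "UU a Ad = d"
  proof -
    have "UU a Ad = ((1-a)^2 - w^2) / 4" unfolding UU_def Ad_def c_def
      by (simp add: field_simps power2_eq_square)
    then show ?thesis using ww by simp
  qed
  have Adc: "c/2 < Ad" using w0 unfolding Ad_def by simp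
  have "w^2 < (1-a)^2" using ww d by simp
  then have "w < 1 - a" using w0 a by (smt (verit) power_mono)
  then have Ad1: "Ad < 1" unfolding Ad_def c_def by simp
  have A0Ad: "A0 < Ad"
  proof (rule ccontr)
    assume "\<not> A0 < Ad"
    then have "UU a A0 \<le> UU a Ad" using UU_mono[of a Ad A0] Adc unfolding c_def by simp
    then show False using A0(1) UAd d2 by simp
  qed
  have AdAp: "Ad < Ap k a"
  proof (rule ccontr)
    assume "\<not> Ad < Ap k a"
    then have "UU a Ad \<le> UU a (Ap k a)" using UU_mono[of a "Ap k a" Ad] Ap_ge by simp
    then show False using UU_Ap UAd d1 by simp
  qed
  have "P4 k a Ad < 0" using P4_neg_iff A0(3) A0Ad AdAp by simp
  then have qAd: "qq a Ad < (k+1) * d" using qq_UU[of a Ad k] UAd by simp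
  define e where "e = (k+1) * d - qq a Ad"
  have e0: "e > 0" using qAd unfolding e_def by simp
  define dl where "dl = min ((Ad - c/2)/2) (e/4)"
  have dl0: "dl > 0" using e0 Adc unfolding dl_def by simp
  define A where "A = Ad - dl"
  have "dl \<le> (Ad - c/2)/2" unfolding dl_def by (rule min.cobounded1)
  then have "2 * dl \<le> Ad - c/2" by (simp add: field_simps)
  then have Ac: "c/2 < A" unfolding A_def using Adc dl0 by linarith
  have AAd: "A < Ad" unfolding A_def using dl0 by simp
  have UA: "d < UU a A" using UU_smono[of a A Ad] Ac AAd UAd unfolding c_def by simp
  have eq: "qq a A - qq a Ad = (Ad - A) * (3 * (A + Ad) - 2 * c) / 4"
    unfolding qq_def c_def by (simp add: field_simps)
  have "3 * (A + Ad) - 2 * c \<le> 4" using AAd Ad1 a unfolding c_def by simp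
  then have "(Ad - A) * (3 * (A + Ad) - 2 * c) \<le> (Ad - A) * 4"
    using AAd by (intro mult_left_mono) auto
  then have "qq a A - qq a Ad \<le> dl" using eq unfolding A_def by simp
  moreover have "dl \<le> e / 4" unfolding dl_def by simp
  ultimately have qA: "qq a A < (k+1) * d" using e0 unfolding e_def by simp
  have "\<forall>v\<in>{0..A}. hh a A v < (k+1) * d" using hh_le_qq[of a A] qA by (meson le_less_trans)
  moreover have "A \<in> {a<..<1}" using Ac AAd Ad1 a unfolding c_def by simp
  ultimately show ?thesis using UA by blast
qed

lemma sq_lt_nn: "0 \<le> (y::real) \<Longrightarrow> 0 \<le> x \<Longrightarrow> x^2 < y^2 \<longleftrightarrow> x < y"
  using sq_le_nn[of x y] by (auto simp: not_le[symmetric])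

context kctx begin

lemma Am_half_lt_iff: assumes a1: "a \<le> 1"
  shows "(1+a)/2 < Am k a \<longleftrightarrow> 1 - 2 / (2 * sqrt k + 1) < a"
proof -
  have k1: "4 * k + 1 > 0" using k by simp
  define t where "t = sqrt k"
  have t0: "t \<ge> 0" and tt: "t^2 = k" using k by (auto simp: t_def)
  have "(1+a)/2 < Am k a \<longleftrightarrow> (4 * k+1) * ((1+a)/2) < (4 * k+1) * Am k a"
    by (rule mult_less_cancel_left_pos[OF k1, symmetric])
  also have "\<dots> \<longleftrightarrow> 4 * tr < 1 + a"
  proof -
    have "(4 * k+1) * ((1+a)/2) = (2 * k + 1) * (1 + a) - 1 / 2 - a / 2" by (simp add: field_simps)
    then show ?thesis unfolding Am_eq by (rule_tac iffI) linarith+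
  qed
  also have "\<dots> \<longleftrightarrow> (4 * tr)^2 < (1+a)^2"
    by (rule sq_lt_nn[symmetric]) (use tr_nn a0 in auto)
  also have "\<dots> \<longleftrightarrow> (4 * k + 1) * (4 * k * (1-a)^2) < (4 * k + 1) * (1+a)^2"
  proof -
    have "(4 * tr)^2 = 16 * (k * DD k a)" using tr_sq by (simp add: power_mult_distrib)
    moreover have "(4 * k + 1) * (4 * k * (1-a)^2) - (4 * k + 1) * (1+a)^2 = 16 * (k * DD k a) - (1+a)^2"
      unfolding DD_def by (simp add: algebra_simps power2_eq_square)
    ultimately show ?thesis by linarith
  qed
  also have "\<dots> \<longleftrightarrow> 4 * k * (1-a)^2 < (1+a)^2"
    by (rule mult_less_cancel_left_pos[OF k1])
  also have "\<dots> \<longleftrightarrow> (2 * t * (1-a))^2 < (1+a)^2" using tt by (simp add: power_mult_distrib)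
  also have "\<dots> \<longleftrightarrow> 2 * t * (1-a) < 1 + a"
    by (rule sq_lt_nn) (use a1 a0 t0 in auto)
  also have "\<dots> \<longleftrightarrow> 2 * t - 1 < a * (2 * t + 1)" by (simp add: algebra_simps)
  also have "\<dots> \<longleftrightarrow> 1 - 2 / (2 * t + 1) < a"
  proof -
    have p: "2 * t + 1 > 0" using t0 by simp
    have "1 - 2 / (2 * t + 1) = (2 * t - 1) / (2 * t + 1)" using p by (simp add: field_simps)
    then show ?thesis using p by (simp add: divide_less_eq)
  qed
  finally show ?thesis unfolding t_def .
qed


end


definition bb :: "real \<Rightarrow> real" where "bb k = 1 - 2 / (2 * sqrt k + 1)"

lemma dmin_cont: "continuous_on {(a, k'). k' > 0 \<and> 0 \<le> a \<and> a \<le> a_star_minus k'} (\<lambda>(a, k'). d_min a k')"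
proof -
  have "continuous_on {x. snd x > 0} (\<lambda>x. d_min (fst x) (snd x))"
    unfolding d_min_def by (intro continuous_intros) (auto simp: add_pos_pos)
  then have "continuous_on {(a, k'). k' > 0 \<and> 0 \<le> a \<and> a \<le> a_star_minus k'} (\<lambda>x. d_min (fst x) (snd x))"
    by (rule continuous_on_subset) auto
  moreover have "(\<lambda>(a, k'). d_min a k') = (\<lambda>x. d_min (fst x) (snd x))" by (simp add: case_prod_beta')
  ultimately show ?thesis by simp
qed

lemma F2_cont: "continuous_on {x. snd x > 0} (\<lambda>x. (2 * (fst x)^2 * snd x - fst x + 2 * snd x
      + 2 * (fst x + 1) * sqrt (snd x) * sqrt (snd x * (fst x)^2 - fst x * (2 * snd x + 1) + snd x)) / (4 * snd x + 1)^2)"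
  by (intro continuous_intros) (auto simp: add_pos_pos)

lemma bb_cont: "continuous_on {x. snd x > 0} (\<lambda>x. bb (snd x) - fst x)"
proof -
  have nz: "2 * sqrt (snd x) + 1 \<noteq> 0" if "x \<in> {x. snd x > 0}" for x :: "real \<times> real"
  proof -
    have "sqrt (snd x) \<ge> 0" using that by simp
    then show ?thesis by linarith
  qed
  show ?thesis unfolding bb_def by (intro continuous_intros) (use nz in auto)
qed

lemma boundary_eq:
  assumes k: "k > 0" and a0: "0 \<le> a" and as: "a \<le> a_star_minus k" and ab: "a = bb k"
  shows "(1 - a)^2 / 4 = (2 * a^2 * k - a + 2 * k
      + 2 * (a + 1) * sqrt k * sqrt (k * a^2 - a * (2 * k + 1) + k)) / (4 * k + 1)^2"
proof -
  have D: "DD k a \<ge> 0" using DD_nonneg[OF k as] .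
  interpret kctx k a using k D a0 by unfold_locales auto
  have a1: "a \<le> 1" using as astar_bounds[OF k] by linarith
  have "(1+a)/2 \<le> Am k a" using Am_half_iff[OF a1] ab unfolding bb_def by simp
  moreover have "\<not> (1+a)/2 < Am k a" using Am_half_lt_iff[OF a1] ab unfolding bb_def by simp
  ultimately have e: "Am k a = (1+a)/2" by simp
  have "UU a (Am k a) = (1-a)^2/4" unfolding e by (rule UU_half)
  then show ?thesis using UU_Am by simp
qed

lemma dmax_cont: "continuous_on {(a, k'). k' > 0 \<and> 0 \<le> a \<and> a \<le> a_star_minus k'} (\<lambda>(a, k'). d_max a k')"
proof -
  define S0 where "S0 = {(a, k'). k' > 0 \<and> 0 \<le> a \<and> a \<le> a_star_minus k'}"
  define f where "f = (\<lambda>x::real\<times>real. (1 - fst x)^2 / 4)"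
  define h where "h = (\<lambda>x. (2 * (fst x)^2 * snd x - fst x + 2 * snd x
      + 2 * (fst x + 1) * sqrt (snd x) * sqrt (snd x * (fst x)^2 - fst x * (2 * snd x + 1) + snd x)) / (4 * snd x + 1)^2)"
  define S where "S = S0 \<inter> (\<lambda>x. bb (snd x) - fst x) -` {0..}"
  define T where "T = S0 \<inter> (\<lambda>x. bb (snd x) - fst x) -` {..0}"
  have S0sub: "S0 \<subseteq> {x. snd x > 0}" unfolding S0_def by auto
  have ST: "S \<union> T = S0" unfolding S_def T_def by auto
  have bc: "continuous_on S0 (\<lambda>x. bb (snd x) - fst x)" using continuous_on_subset[OF bb_cont S0sub] .
  have cS: "closedin (top_of_set (S \<union> T)) S" unfolding ST unfolding S_def
    by (rule continuous_closedin_preimage[OF bc]) simp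
  have cT: "closedin (top_of_set (S \<union> T)) T" unfolding ST unfolding T_def
    by (rule continuous_closedin_preimage[OF bc]) simp
  have fS: "continuous_on S f" unfolding f_def by (intro continuous_intros) auto
  have hT: "continuous_on T h" unfolding h_def
    by (rule continuous_on_subset[OF F2_cont]) (auto simp: T_def S0_def)
  have C: "continuous_on (S \<union> T) (\<lambda>x. if fst x < bb (snd x) then f x else h x)"
  proof (rule continuous_on_cases_local[OF cS cT fS hT])
    fix x assume "x \<in> S \<and> \<not> fst x < bb (snd x) \<or> x \<in> T \<and> fst x < bb (snd x)"
    then have xS: "x \<in> S0" and xb: "fst x = bb (snd x)" unfolding S_def T_def by auto
    obtain a k' where x: "x = (a, k')" by (cases x)
    have h1: "k' > 0" "0 \<le> a" "a \<le> a_star_minus k'" "a = bb k'" using xS xb unfolding x S0_def by auto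
    show "f x = h x" unfolding f_def h_def x fst_conv snd_conv by (rule boundary_eq[OF h1])
  qed
  have E: "\<And>x. x \<in> S0 \<Longrightarrow> (\<lambda>(a, k'). d_max a k') x = (if fst x < bb (snd x) then f x else h x)"
  proof -
    fix x assume "x \<in> S0"
    obtain a k' where x: "x = (a, k')" by (cases x)
    have a0: "0 \<le> a" using \<open>x \<in> S0\<close> unfolding x S0_def by simp
    show "(\<lambda>(a, k'). d_max a k') x = (if fst x < bb (snd x) then f x else h x)"
      unfolding x d_max_def f_def h_def bb_def using a1_iff[OF a0, of k'] by simp
  qed
  show ?thesis unfolding S0_def[symmetric]
    by (rule continuous_on_eq[OF C[unfolded ST]]) (simp only: E)
qed

lemma d_minus_eq: assumes a0: "0 \<le> a" and a1: "a < 1" shows "d_minus a = (1-a)^2/4"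
  unfolding d_minus_def
proof (rule cSup_eq_maximum)
  have p: "(1+a)/2 > 0" using a0 by simp
  have mem: "(1+a)/2 \<in> {a<..<1}" using a1 by auto
  have "g ((1+a)/2) a / ((1+a)/2) = UU a ((1+a)/2)" by (rule UU_g[OF p])
  also have "\<dots> = (1-a)^2/4" by (rule UU_half)
  finally have e: "(1-a)^2/4 = g ((1+a)/2) a / ((1+a)/2)" by simp
  show "(1-a)^2/4 \<in> (\<lambda>y. g y a / y) ` {a<..<1}"
    by (rule image_eqI[of "(1-a)^2/4" "\<lambda>y. g y a / y" "(1+a)/2", OF e mem])
next
  fix x assume "x \<in> (\<lambda>y. g y a / y) ` {a<..<1}"
  then obtain y where y: "y \<in> {a<..<1}" and x: "x = g y a / y" by auto
  have "y > 0" using y a0 by simp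
  then have "x = UU a y" using x UU_g by simp
  then show "x \<le> (1-a)^2/4" using UU_le_max[of a y] by simp
qed

lemma part_i:
  assumes k: "k > 0" and a0: "0 \<le> a" and as: "a \<le> a_star_minus k"
  shows "0 \<le> d_min a k \<and> d_min a k \<le> d_max a k \<and> d_max a k \<le> d_minus a"
proof -
  have D: "DD k a \<ge> 0" using DD_nonneg[OF k as] .
  interpret kctx k a using k D a0 by unfold_locales auto
  have a1: "a < 1" using as astar_bounds[OF k] by linarith
  have "(1+a)/2 \<le> Ap k a" by (rule Ap_ge)
  moreover have "a \<le> (1+a)/2" using a1 by simp
  ultimately have Apa: "a \<le> Ap k a" by linarith
  have Ap1: "Ap k a \<le> 1" using Ap_le1 a1 by simp
  have "0 \<le> (1 - Ap k a) * (Ap k a - a)" using Apa Ap1 by (intro mult_nonneg_nonneg) auto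
  then have "0 \<le> UU a (Ap k a)" unfolding UU_def .
  then have m0: "0 \<le> d_min a k" using UU_Ap by linarith
  have dme: "d_minus a = (1-a)^2/4" using d_minus_eq[OF a0 a1] .
  have mM: "d_min a k \<le> d_max a k"
  proof (cases "a < a1_minus k")
    case True
    have "d_max a k = (1-a)^2/4" using dmax_lt[OF True] .
    then show ?thesis using UU_Ap UU_le_max[of a "Ap k a"] by linarith
  next
    case False
    then have "1 - 2 / (2 * sqrt k + 1) \<le> a" using a1_iff[OF a0, of k] by simp
    then have "(1+a)/2 \<le> Am k a" using Am_half_iff a1 by simp
    then have "UU a (Ap k a) \<le> UU a (Am k a)" using UU_mono[of a "Am k a" "Ap k a"] Am_le_Ap by simp
    then show ?thesis using dmax_ge[OF False] UU_Ap by linarith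
  qed
  have Mm: "d_max a k \<le> d_minus a"
  proof (cases "a < a1_minus k")
    case True
    show ?thesis using dmax_lt[OF True] dme by linarith
  next
    case False
    show ?thesis using dmax_ge[OF False] dme UU_le_max[of a "Am k a"] by linarith
  qed
  show ?thesis using m0 mM Mm by blast
qed

lemma part_ii: assumes k: "k > 0" shows "d_max (a_star_minus k) k = d_min (a_star_minus k) k"
proof -
  have ab: "0 < a_star_minus k" using astar_bounds[OF k] by simp
  have "\<not> a_star_minus k < a1_minus k" using astar_ge_b[OF k] ab unfolding a1_minus_def by simp
  moreover have "k * (a_star_minus k)^2 - a_star_minus k * (2 * k + 1) + k = 0"
    using DD_astar[OF k] unfolding DD_def .
  ultimately show ?thesis unfolding d_max_def d_min_def by simp
qed

lemma part_iii: assumes k: "k > 0"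
  shows "D_minus k = {(a, d). (a, d) \<in> H \<and> a < a_star_minus k \<and> d_min a k < d \<and> d < d_max a k}"
proof (intro set_eqI iffI)
  fix x assume x: "x \<in> D_minus k"
  obtain a d where xe: "x = (a, d)" by (cases x)
  have Hm: "(a, d) \<in> H" and ex: "\<exists>A\<in>{a<..<1}. d_diamond k A a < d \<and> d < g A a / A"
    using x unfolding xe D_minus_def by auto
  have a: "0 < a" "a < 1" and d: "d > 0" using Hm unfolding H_def by auto
  obtain A where A: "A \<in> {a<..<1}" and A1: "d_diamond k A a < d" and A2: "d < g A a / A" using ex by blast
  have H1: "\<forall>v\<in>{0..A}. hh a A v < (k+1) * d" using dd_char[OF k a(1)] A A1 by simp
  have H2: "d < UU a A" using A2 UU_g[of A a] A a by simp
  have "DD k a > 0 \<and> d_min a k < d \<and> d < d_max a k"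
    using incl1[OF k a d _ _ H1 H2] A by simp
  then show "x \<in> {(a, d). (a, d) \<in> H \<and> a < a_star_minus k \<and> d_min a k < d \<and> d < d_max a k}"
    using DD_pos_iff[OF k a(2)] Hm xe by simp
next
  fix x assume x: "x \<in> {(a, d). (a, d) \<in> H \<and> a < a_star_minus k \<and> d_min a k < d \<and> d < d_max a k}"
  obtain a d where xe: "x = (a, d)" by (cases x)
  have Hm: "(a, d) \<in> H" and as: "a < a_star_minus k" and d1: "d_min a k < d" and d2: "d < d_max a k"
    using x xe by auto
  have a: "0 < a" "a < 1" and d: "d > 0" using Hm unfolding H_def by auto
  have Dp: "DD k a > 0" using DD_pos_iff[OF k a(2)] as by simp
  obtain A where A: "A \<in> {a<..<1}" and H1: "\<forall>v\<in>{0..A}. hh a A v < (k+1) * d" and H2: "d < UU a A"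
    using incl2[OF k a d Dp d1 d2] by blast
  have "d_diamond k A a < d" using dd_char[OF k a(1)] A H1 by simp
  moreover have "d < g A a / A" using H2 UU_g[of A a] A a by simp
  ultimately show "x \<in> D_minus k" unfolding xe D_minus_def using Hm A by auto
qed

theorem proposition2p9:
  fixes k :: real
  assumes "k > 0"
  shows "continuous_on {(a, k'). k' > 0 \<and> 0 \<le> a \<and> a \<le> a_star_minus k'}
           (\<lambda>(a, k'). d_min a k')
       \<and> continuous_on {(a, k'). k' > 0 \<and> 0 \<le> a \<and> a \<le> a_star_minus k'}
           (\<lambda>(a, k'). d_max a k')
       \<and> (\<forall>a\<in>{0..a_star_minus k}.
            0 \<le> d_min a k \<and> d_min a k \<le> d_max a k \<and> d_max a k \<le> d_minus a)
       \<and> d_max (a_star_minus k) k = d_min (a_star_minus k) k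
       \<and> D_minus k = {(a, d). (a, d) \<in> H \<and> a < a_star_minus k
                              \<and> d_min a k < d \<and> d < d_max a k}"
proof (intro conjI)
  show "continuous_on {(a, k'). k' > 0 \<and> 0 \<le> a \<and> a \<le> a_star_minus k'} (\<lambda>(a, k'). d_min a k')"
    by (rule dmin_cont)
  show "continuous_on {(a, k'). k' > 0 \<and> 0 \<le> a \<and> a \<le> a_star_minus k'} (\<lambda>(a, k'). d_max a k')"
    by (rule dmax_cont)
  show "\<forall>a\<in>{0..a_star_minus k}. 0 \<le> d_min a k \<and> d_min a k \<le> d_max a k \<and> d_max a k \<le> d_minus a"
  proof
    fix a assume "a \<in> {0..a_star_minus k}"
    then show "0 \<le> d_min a k \<and> d_min a k \<le> d_max a k \<and> d_max a k \<le> d_minus a"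
      using part_i[OF assms, of a] by simp
  qed
  show "d_max (a_star_minus k) k = d_min (a_star_minus k) k" by (rule part_ii[OF assms])
  show "D_minus k = {(a, d). (a, d) \<in> H \<and> a < a_star_minus k \<and> d_min a k < d \<and> d < d_max a k}"
    by (rule part_iii[OF assms])
qed

end
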